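(* Let $G$ be a finite simple graph, $s\ge1$, and let $e_1,\dots,e_s$ and $f_1,\dots,f_s$ be two sequences of edges of $G$ (repetitions allowed) with $f_1\cdots f_s=e_1\cdots e_s$ as monomials. If vertices $u,v$ (possibly equal) are even-connected with respect to $e_1\cdots e_s$, then $u$ and $v$ are even-connected with respect to $f_1\cdots f_s$.
   Context: Edges $xy$ of $G$ are identified with monomials $xy$ in the polynomial ring on the vertices. Even-connection: vertices $u,v$ (possibly equal) are even-connected with respect to the sequence $e_1,\dots,e_s$ if there is a sequence of vertices $p_0,\dots,p_{2k+1}$, $k\geq1$ (vertices may repeat), with (1) $p_0=u$, $p_{2k+1}=v$; (2) for all $0\le l\le k-1$, $p_{2l+1}p_{2l+2}=e_i$ for some $i$; (3) for every $i$, $|\{l\ge0 : p_{2l+1}p_{2l+2}=e_i\}|\le|\{j: e_j=e_i\}|$; (4) for all $0\le r\le 2k$, $p_rp_{r+1}$ is an edge of $G$. *)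

theory Defs
  imports Main "HOL-Library.Multiset"
begin

definition simple_graph :: "'a set \<Rightarrow> 'a set set \<Rightarrow> bool" where
  "simple_graph V E \<longleftrightarrow> finite V \<and> (\<forall>e\<in>E. \<exists>x y. x \<noteq> y \<and> x \<in> V \<and> y \<in> V \<and> e = {x, y})"

text \<open>The monomial of an edge {x,y} is xy; a monomial is represented by the multiset
  of its variables (with multiplicity), so the product of a sequence of edges is
  the sum of the vertex multisets of the edges.\<close>
definition edge_monomial :: "'a set \<Rightarrow> 'a multiset" where
  "edge_monomial e = mset_set e"

definition seq_monomial :: "'a set list \<Rightarrow> 'a multiset" where
  "seq_monomial es = sum_list (map edge_monomial es)"

definition even_connected :: "'a set set \<Rightarrow> 'a set list \<Rightarrow> 'a \<Rightarrow> 'a \<Rightarrow> bool" where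
  "even_connected E es u v \<longleftrightarrow>
    (\<exists>(k::nat) (p::nat \<Rightarrow> 'a). k \<ge> 1 \<and> p 0 = u \<and> p (2*k+1) = v \<and>
       (\<forall>l<k. {p (2*l+1), p (2*l+2)} \<in> set es) \<and>
       (\<forall>e \<in> set es. card {l. l < k \<and> {p (2*l+1), p (2*l+2)} = e} \<le> count (mset es) e) \<and>
       (\<forall>r\<le>2*k. {p r, p (r+1)} \<in> E))"

end

theory Submission imports Defs begin
definition vert :: "'a set multiset \<Rightarrow> 'a multiset" where
  "vert X = sum_mset (image_mset mset_set X)"

lemma vert_simps[simp]: "vert {#} = {#}" "vert (add_mset x X) = mset_set x + vert X"
  "vert (X + Y) = vert X + vert Y"
  by (auto simp: vert_def)

lemma in_vert: "w \<in># vert F \<Longrightarrow> \<exists>x\<in>#F. w \<in># mset_set x"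
  by (induction F) auto

lemma count_map_upt: "count (mset (map g [0..<k])) e = card {l. l<k \<and> g l = e}"
proof (induction k)
  case 0 then show ?case by simp
next
  case (Suc k)
  have "{l. l<Suc k \<and> g l = e} = {l. l<k \<and> g l = e} \<union> (if g k = e then {k} else {})"
    by (auto simp: less_Suc_eq)
  then show ?case using Suc by (auto simp: card_insert_if)
qed

lemma walk_vert: "(\<forall>r<2*k+1. p r \<noteq> p (Suc r)) \<Longrightarrow>
   vert (mset (map (\<lambda>l. {p(2*l+1), p(2*l+2)}) [0..<k])) + {#p(2*k+1)#}
 = vert (mset (map (\<lambda>l. {p(2*l+2), p(2*l+3)}) [0..<k])) + {#p 1#}"
proof (induction k)
  case 0 then show ?case by simp
next
  case (Suc k)
  have IH: "vert (mset (map (\<lambda>l. {p(2*l+1), p(2*l+2)}) [0..<k])) + {#p(2*k+1)#}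
 = vert (mset (map (\<lambda>l. {p(2*l+2), p(2*l+3)}) [0..<k])) + {#p 1#}"
    using Suc by auto
  have d1: "p (2*k+1) \<noteq> p (2*k+2)" using Suc.prems[rule_format, of "2*k+1"] by simp
  have d2: "p (2*k+2) \<noteq> p (2*k+3)" using Suc.prems[rule_format, of "2*k+2"] by (simp add: numeral_3_eq_3)
  have e3: "p (3 + 2*k) = p (Suc (Suc (Suc (2*k))))" by (simp add: numeral_3_eq_3)
  show ?case using IH d1 d2 e3 by (simp add: add_ac)
qed

lemma two_set: "\<forall>x\<in>E. \<exists>a b. a \<noteq> b \<and> x = {a,b} \<Longrightarrow> x \<in> E \<Longrightarrow> w \<in># mset_set x
  \<Longrightarrow> \<exists>q. q \<noteq> w \<and> x = {w,q}"
  by (metis elem_mset_set finite.emptyI finite_insert insert_commute insert_iff singletonD)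

lemma tail:
  fixes F Gs :: "'a set multiset"
  assumes E2: "\<forall>x\<in>E. \<exists>a b. a \<noteq> b \<and> x = {a,b}"
  shows "set_mset F \<subseteq> E \<Longrightarrow> set_mset Gs \<subseteq> E \<Longrightarrow> vert Gs + {#w#} = vert F + {#v#} \<Longrightarrow> w \<in># vert F \<Longrightarrow>
    \<exists>k q. k \<ge> 1 \<and> q 0 = w \<and> q (2*k) = v \<and> mset (map (\<lambda>l. {q(2*l), q(2*l+1)}) [0..<k]) \<subseteq># F
       \<and> (\<forall>r<2*k. {q r, q (Suc r)} \<in> E)"
proof (induction "size F" arbitrary: F Gs w rule: less_induct)
  case less
  from in_vert[OF less.prems(4)] obtain x where x: "x \<in># F" "w \<in># mset_set x" by blast
  with less.prems(1) have xE: "x \<in> E" by auto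
  from two_set[OF E2 xE x(2)] obtain q where q: "q \<noteq> w" "x = {w,q}" by blast
  define F' where "F' = F - {#x#}"
  have F: "F = add_mset x F'" using x(1) F'_def by simp
  have vF: "vert F = add_mset w (add_mset q (vert F'))" using F q by simp
  have vG: "vert Gs = add_mset q (vert F' + {#v#})" using less.prems(3) vF by simp
  then have "q \<in># vert Gs" by simp
  from in_vert[OF this] obtain y where y: "y \<in># Gs" "q \<in># mset_set y" by blast
  with less.prems(2) have yE: "y \<in> E" by auto
  from two_set[OF E2 yE y(2)] obtain w' where w': "w' \<noteq> q" "y = {q,w'}" by blast
  define Gs' where "Gs' = Gs - {#y#}"
  have Gs: "Gs = add_mset y Gs'" using y(1) Gs'_def by simp
  have inv: "vert Gs' + {#w'#} = vert F' + {#v#}" using vG Gs w' by simp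
  show ?case
  proof (cases "w' = v")
    case True
    define Q where "Q = (\<lambda>r::nat. if r = 0 then w else if r = 1 then q else v)"
    have "mset (map (\<lambda>l. {Q(2*l), Q(2*l+1)}) [0..<1]) \<subseteq># F"
      using F q by (simp add: Q_def)
    moreover have "\<forall>r<2*1. {Q r, Q (Suc r)} \<in> E"
    proof (intro allI impI)
      fix r :: nat assume "r < 2*1"
      then have "r = 0 \<or> r = 1" by auto
      then show "{Q r, Q (Suc r)} \<in> E" using xE yE q w' True by (auto simp: Q_def)
    qed
    ultimately show ?thesis by (intro exI[of _ 1] exI[of _ Q]) (auto simp: Q_def)
  next
    case False
    have "w' \<in># vert F'" using inv False
      by (metis add_mset_add_single union_single_eq_member insert_noteq_member)
    moreover have "size F' < size F" using F by simp
    moreover have "set_mset F' \<subseteq> E" using less.prems(1) F by auto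
    moreover have "set_mset Gs' \<subseteq> E" using less.prems(2) Gs by auto
    ultimately obtain k q' where IH: "k \<ge> 1" "q' 0 = w'" "q' (2*k) = v"
      "mset (map (\<lambda>l. {q'(2*l), q'(2*l+1)}) [0..<k]) \<subseteq># F'"
      "\<forall>r<2*k. {q' r, q' (Suc r)} \<in> E"
      using less.hyps inv by blast
    define Q where "Q = (\<lambda>r::nat. case r of 0 \<Rightarrow> w | Suc 0 \<Rightarrow> q | Suc (Suc r') \<Rightarrow> q' r')"
    have Q2: "Q (Suc (Suc r)) = q' r" for r by (simp add: Q_def)
    have "map (\<lambda>l. {Q(2*l), Q(2*l+1)}) [0..<Suc k] = x # map (\<lambda>l. {q'(2*l), q'(2*l+1)}) [0..<k]"
      unfolding map_upt_Suc using q by (simp add: Q_def)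
    then have "mset (map (\<lambda>l. {Q(2*l), Q(2*l+1)}) [0..<Suc k]) \<subseteq># F"
      using IH(4) F by simp
    moreover have "\<forall>r<2*Suc k. {Q r, Q (Suc r)} \<in> E"
    proof (intro allI impI)
      fix r :: nat assume r: "r < 2*Suc k"
      show "{Q r, Q (Suc r)} \<in> E"
      proof (cases r)
        case 0 then show ?thesis using xE q by (simp add: Q_def)
      next
        case (Suc r1)
        show ?thesis
        proof (cases r1)
          case 0 then show ?thesis using yE w' IH(2) Suc by (simp add: Q_def insert_commute)
        next
          case (Suc r2)
          then show ?thesis using IH(5) r \<open>r = Suc r1\<close> by (simp add: Q_def)
        qed
      qed
    qed
    moreover have "Q (2 * Suc k) = v" using IH(3) by (simp add: Q_def)
    ultimately show ?thesis by (intro exI[of _ "Suc k"] exI[of _ Q]) (auto simp: Q_def)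
  qed
qed

theorem theorem6p6:
  fixes V :: "'a set" and E :: "'a set set" and es fs :: "'a set list" and s :: nat and u v :: 'a
  assumes "simple_graph V E"
    and "s \<ge> 1" and "length es = s" and "length fs = s"
    and "set es \<subseteq> E" and "set fs \<subseteq> E"
    and "seq_monomial fs = seq_monomial es"
    and "even_connected E es u v"
  shows "even_connected E fs u v"
proof -
  have E2: "\<forall>x\<in>E. \<exists>a b. a \<noteq> b \<and> x = {a,b}" using assms(1) unfolding simple_graph_def by blast
  have sm: "seq_monomial xs = vert (mset xs)" for xs :: "'a set list"
    by (induction xs) (auto simp: seq_monomial_def edge_monomial_def)
  from assms(8) obtain k :: nat and p where kp: "k \<ge> 1" "p 0 = u" "p (2*k+1) = v"
      "\<forall>l<k. {p (2*l+1), p (2*l+2)} \<in> set es"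
      "\<forall>e \<in> set es. card {l. l < k \<and> {p (2*l+1), p (2*l+2)} = e} \<le> count (mset es) e"
      "\<forall>r\<le>2*k. {p r, p (r+1)} \<in> E"
    unfolding even_connected_def by blast
  define g where "g = (\<lambda>l. {p (2*l+1), p (2*l+2)})"
  define h where "h = (\<lambda>l. {p (2*l+2), p (2*l+3)})"
  define A where "A = mset (map g [0..<k])"
  define M where "M = vert (mset es)"
  have AM: "A \<subseteq># mset es"
    unfolding subseteq_mset_def
  proof
    fix e
    show "count A e \<le> count (mset es) e"
    proof (cases "e \<in> set es")
      case True then show ?thesis using kp(5) unfolding A_def count_map_upt g_def by simp
    next
      case False
      then have "{l. l<k \<and> g l = e} = {}" using kp(4) by (auto simp: g_def)
      then show ?thesis unfolding A_def count_map_upt by (simp only: card.empty)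
    qed
  qed
  have dist: "\<forall>r<2*k+1. p r \<noteq> p (Suc r)"
  proof (intro allI impI)
    fix r assume "r < 2*k+1"
    then have "{p r, p (r+1)} \<in> E" using kp(6) by auto
    then show "p r \<noteq> p (Suc r)" using E2 by fastforce
  qed
  have wv: "vert A + {#v#} = vert (mset (map h [0..<k])) + {#p 1#}"
    using walk_vert[OF dist] kp(3) by (simp add: A_def g_def h_def)
  define Gs where "Gs = mset (map h [0..<k]) + (mset es - A)"
  have vA: "vert (mset es) = vert A + vert (mset es - A)"
    using AM by (metis subset_mset.add_diff_inverse vert_simps(3))
  have inv: "vert Gs + {#p 1#} = vert (mset fs) + {#v#}"
  proof -
    have "vert Gs + {#p 1#} = vert (mset (map h [0..<k])) + {#p 1#} + vert (mset es - A)"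
      by (simp add: Gs_def add_ac)
    also have "\<dots> = vert A + {#v#} + vert (mset es - A)" using wv by simp
    also have "\<dots> = vert (mset es) + {#v#}" using vA by (simp add: add_ac)
    finally show ?thesis using assms(7) sm by metis
  qed
  have "g 0 \<in> set es" using kp(1,4) by (auto simp: g_def)
  then obtain rest where "mset es = add_mset (g 0) rest" by (metis set_mset_mset mset_add)
  then have "vert (mset es) = mset_set (g 0) + vert rest" by simp
  moreover have "p 1 \<in># mset_set (g 0)" by (simp add: g_def)
  ultimately have "p 1 \<in># vert (mset es)" by simp
  then have p1: "p 1 \<in># vert (mset fs)" using assms(7) sm by metis
  have GsE: "set_mset Gs \<subseteq> E"
  proof
    fix x assume "x \<in># Gs"
    then have "x \<in> h ` {0..<k} \<or> x \<in># mset es"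
      unfolding Gs_def by (auto dest: in_diffD)
    then show "x \<in> E"
    proof
      assume "x \<in> h ` {0..<k}"
      then obtain l where "l < k" "x = h l" by auto
      then show ?thesis using kp(6)[rule_format, of "2*l+2"] by (simp add: h_def numeral_3_eq_3)
    next
      assume "x \<in># mset es" then show ?thesis using assms(5) by auto
    qed
  qed
  have fE: "set_mset (mset fs) \<subseteq> E" using assms(6) by simp
  obtain k' :: nat and q where kq: "k' \<ge> 1" "q 0 = p 1" "q (2*k') = v"
      "mset (map (\<lambda>l. {q(2*l), q(2*l+1)}) [0..<k']) \<subseteq># mset fs"
      "\<forall>r<2*k'. {q r, q (Suc r)} \<in> E"
    using tail[OF E2 fE GsE inv p1] by blast
  define P where "P = (\<lambda>r::nat. case r of 0 \<Rightarrow> u | Suc r' \<Rightarrow> q r')"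
  have cnt: "card {l. l < k' \<and> {P (2*l+1), P (2*l+2)} = e} \<le> count (mset fs) e" for e
  proof -
    have "card {l. l < k' \<and> {P (2*l+1), P (2*l+2)} = e}
        = count (mset (map (\<lambda>l. {q(2*l), q(2*l+1)}) [0..<k'])) e"
      unfolding count_map_upt by (simp add: P_def)
    also have "\<dots> \<le> count (mset fs) e" using kq(4) by (simp add: subseteq_mset_def)
    finally show ?thesis .
  qed
  have inset: "\<forall>l<k'. {P (2*l+1), P (2*l+2)} \<in> set fs"
  proof (intro allI impI)
    fix l assume "l < k'"
    then have "{q(2*l), q(2*l+1)} \<in># mset (map (\<lambda>l. {q(2*l), q(2*l+1)}) [0..<k'])" by simp
    then have "{q(2*l), q(2*l+1)} \<in># mset fs" using kq(4) by (meson mset_subset_eqD)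
    then show "{P (2*l+1), P (2*l+2)} \<in> set fs" by (simp add: P_def)
  qed
  have edges: "\<forall>r\<le>2*k'. {P r, P (r+1)} \<in> E"
  proof (intro allI impI)
    fix r assume r: "r \<le> 2*k'"
    show "{P r, P (r+1)} \<in> E"
    proof (cases r)
      case 0 then show ?thesis using kp(6)[rule_format, of 0] kp(2) kq(2) by (simp add: P_def)
    next
      case (Suc r') then show ?thesis using kq(5) r by (simp add: P_def)
    qed
  qed
  have "P 0 = u" "P (2*k'+1) = v" using kq(3) by (auto simp: P_def)
  then show ?thesis unfolding even_connected_def
    using kq(1) inset cnt edges by blast
qed

end
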